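(* For any Kleinian group $\Gamma$, the set $C_\Gamma=\{\psi\in\mathrm{PSL}_2\mathbb{C}\;|\;\psi\Gamma\psi^{-1}\cap\Gamma\text{ is nonelementary}\}$ is countable.
   Context: A Kleinian group is a discrete torsion-free subgroup of $\mathrm{PSL}_2\mathbb{C}$; it is elementary if its limit set has at most two points (equivalently, it is abelian), and nonelementary otherwise. *)

theory Defs
  imports "HOL-Analysis.Analysis"
begin

typedef SL2C = "{A :: complex^2^2. det A = 1}" morphisms mat_of Abs_SL2C
  by (rule exI[of _ "mat 1"]) simp

lemma det_mat_of [simp]: "det (mat_of A) = 1"
  using mat_of by auto

text \<open>Adjugate of a 2x2 matrix (the inverse when the determinant is 1).\<close>
definition adj2 :: "complex^2^2 \<Rightarrow> complex^2^2" where
  "adj2 M = vector [vector [M$2$2, - M$1$2], vector [- M$2$1, M$1$1]]"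

lemma det_adj2: "det (adj2 M) = det M"
  by (simp add: adj2_def det_2 algebra_simps)

lemma adj2_neg: "adj2 (- M) = - adj2 M"
  by (simp add: adj2_def vec_eq_iff forall_2 vector_2)

lemma mat_mul_lneg: "(- A) ** (B :: complex^2^2) = - (A ** B)"
  by (simp add: matrix_matrix_mult_def vec_eq_iff sum_negf)

lemma mat_mul_rneg: "A ** (- B :: complex^2^2) = - (A ** B)"
  by (simp add: matrix_matrix_mult_def vec_eq_iff sum_negf)

definition sl2_mult :: "SL2C \<Rightarrow> SL2C \<Rightarrow> SL2C" where
  "sl2_mult A B = Abs_SL2C (mat_of A ** mat_of B)"

definition sl2_inv :: "SL2C \<Rightarrow> SL2C" where
  "sl2_inv A = Abs_SL2C (adj2 (mat_of A))"

lemma mat_of_sl2_mult: "mat_of (sl2_mult A B) = mat_of A ** mat_of B"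
  unfolding sl2_mult_def by (rule Abs_SL2C_inverse) (simp add: det_mul)

lemma mat_of_sl2_inv: "mat_of (sl2_inv A) = adj2 (mat_of A)"
  unfolding sl2_inv_def by (rule Abs_SL2C_inverse) (simp add: det_adj2)

definition sl2_rel :: "SL2C \<Rightarrow> SL2C \<Rightarrow> bool" where
  "sl2_rel A B \<longleftrightarrow> mat_of A = mat_of B \<or> mat_of A = - mat_of B"

lemma equivp_sl2_rel: "equivp sl2_rel"
  by (rule equivpI) (auto simp: reflp_def symp_def transp_def sl2_rel_def)

quotient_type PSL2C = SL2C / sl2_rel
  by (rule equivp_sl2_rel)

lift_definition psl_mult :: "PSL2C \<Rightarrow> PSL2C \<Rightarrow> PSL2C" is sl2_mult
  by (auto simp: sl2_rel_def mat_of_sl2_mult mat_mul_lneg mat_mul_rneg)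

lift_definition psl_inv :: "PSL2C \<Rightarrow> PSL2C" is sl2_inv
  by (auto simp: sl2_rel_def mat_of_sl2_inv adj2_neg)

lift_definition psl_one :: "PSL2C" is "Abs_SL2C (mat 1)" .

lift_definition psl_dist :: "PSL2C \<Rightarrow> PSL2C \<Rightarrow> real" is
  "\<lambda>A B. min (norm (mat_of A - mat_of B)) (norm (mat_of A + mat_of B))"
  by (auto simp: sl2_rel_def norm_minus_commute algebra_simps min.commute)

fun psl_pow :: "PSL2C \<Rightarrow> nat \<Rightarrow> PSL2C" where
  "psl_pow g 0 = psl_one"
| "psl_pow g (Suc n) = psl_mult g (psl_pow g n)"

section \<open>Moebius action on the Riemann sphere (None = infinity)\<close>

definition mobius_mat :: "complex^2^2 \<Rightarrow> complex option \<Rightarrow> complex option" where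
  "mobius_mat M z = (let a = M$1$1; b = M$1$2; c = M$2$1; d = M$2$2 in
     (case z of None \<Rightarrow> (if c = 0 then None else Some (a / c))
      | Some w \<Rightarrow> (if c * w + d = 0 then None else Some ((a * w + b) / (c * w + d)))))"

lift_definition psl_act :: "PSL2C \<Rightarrow> complex option \<Rightarrow> complex option" is
  "\<lambda>A. mobius_mat (mat_of A)"
proof -
  fix A B assume "sl2_rel A B"
  then show "mobius_mat (mat_of A) = mobius_mat (mat_of B)"
    unfolding sl2_rel_def
  proof
    assume "mat_of A = - mat_of B"
    then show ?thesis
      by (auto simp: fun_eq_iff mobius_mat_def Let_def split: option.splits)
         (auto simp: field_simps, metis add.commute add_eq_0_iff2 diff_conv_add_uminus minus_add_distrib,
          metis add.commute add_eq_0_iff2 diff_conv_add_uminus minus_add_distrib)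
  qed simp
qed

fun chordal :: "complex option \<Rightarrow> complex option \<Rightarrow> real" where
  "chordal None None = 0"
| "chordal (Some z) None = 2 / sqrt (1 + (cmod z)\<^sup>2)"
| "chordal None (Some w) = 2 / sqrt (1 + (cmod w)\<^sup>2)"
| "chordal (Some z) (Some w) =
     2 * cmod (z - w) / sqrt ((1 + (cmod z)\<^sup>2) * (1 + (cmod w)\<^sup>2))"

definition psl_subgroup :: "PSL2C set \<Rightarrow> bool" where
  "psl_subgroup G \<longleftrightarrow> psl_one \<in> G \<and> (\<forall>g\<in>G. \<forall>h\<in>G. psl_mult g h \<in> G)
     \<and> (\<forall>g\<in>G. psl_inv g \<in> G)"

definition psl_discrete :: "PSL2C set \<Rightarrow> bool" where
  "psl_discrete G \<longleftrightarrow> (\<forall>g\<in>G. \<exists>e>0. \<forall>h\<in>G. h \<noteq> g \<longrightarrow> e \<le> psl_dist g h)"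

definition torsion_free :: "PSL2C set \<Rightarrow> bool" where
  "torsion_free G \<longleftrightarrow> (\<forall>g\<in>G. \<forall>n>0. psl_pow g n = psl_one \<longrightarrow> g = psl_one)"

definition kleinian :: "PSL2C set \<Rightarrow> bool" where
  "kleinian G \<longleftrightarrow> psl_subgroup G \<and> psl_discrete G \<and> torsion_free G"

definition limit_set :: "PSL2C set \<Rightarrow> complex option set" where
  "limit_set G = {x. \<exists>z g. (\<forall>n. g n \<in> G) \<and> inj g \<and>
      (\<lambda>n. chordal (psl_act (g n) z) x) \<longlonglongrightarrow> 0}"

definition elementary :: "PSL2C set \<Rightarrow> bool" where
  "elementary G \<longleftrightarrow> finite (limit_set G) \<and> card (limit_set G) \<le> 2"

definition psl_conj_set :: "PSL2C \<Rightarrow> PSL2C set \<Rightarrow> PSL2C set" where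
  "psl_conj_set \<psi> G = (\<lambda>g. psl_mult (psl_mult \<psi> g) (psl_inv \<psi>)) ` G"

end

theory Submission
  imports Defs
begin


lemma abs_rep[simp]: "abs_PSL2C (rep_PSL2C g) = g"
  by (rule Quotient_abs_rep[OF Quotient_PSL2C])

lemma psl_eq_iff: "abs_PSL2C A = abs_PSL2C B \<longleftrightarrow> mat_of A = mat_of B \<or> mat_of A = - mat_of B"
  by (simp add: PSL2C.abs_eq_iff sl2_rel_def)

lemma mat_of_Abs[simp]: "det M = 1 \<Longrightarrow> mat_of (Abs_SL2C M) = M"
  by (rule Abs_SL2C_inverse) simp

lemma mm2: "((A::'a::comm_ring_1^2^2) ** B) $ i $ j = A$i$1 * B$1$j + A$i$2 * B$2$j"
  by (simp add: matrix_matrix_mult_def sum_2)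

lemma mv2: "((A::'a::comm_ring_1^2^2) *v u) $ i = A$i$1 * u$1 + A$i$2 * u$2"
  by (simp add: matrix_vector_mult_def sum_2)

lemma vec2_eq: "(x::'a^2) = y \<longleftrightarrow> x$1 = y$1 \<and> x$2 = y$2"
  by (simp add: vec_eq_iff forall_2)

lemma mat2_eq: "(A::'a^2^2) = B \<longleftrightarrow> A$1$1 = B$1$1 \<and> A$1$2 = B$1$2 \<and> A$2$1 = B$2$1 \<and> A$2$2 = B$2$2"
  by (simp add: vec_eq_iff forall_2)

lemma adj2_nth[simp]: "adj2 M $ 1 $ 1 = M$2$2" "adj2 M $ 1 $ 2 = - M$1$2"
   "adj2 M $ 2 $ 1 = - M$2$1" "adj2 M $ 2 $ 2 = M$1$1"
  by (simp_all add: adj2_def)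

lemma mat1_nth[simp]: "(mat 1 :: complex^2^2) $ 1 $ 1 = 1" "(mat 1 :: complex^2^2) $ 1 $ 2 = 0"
   "(mat 1 :: complex^2^2) $ 2 $ 1 = 0" "(mat 1 :: complex^2^2) $ 2 $ 2 = 1"
  by (simp_all add: mat_def)

lemma adj2_mult: "det M = 1 \<Longrightarrow> adj2 M ** M = mat 1"
  by (simp add: mat2_eq mm2 det_2 algebra_simps)

lemma mult_adj2: "det M = 1 \<Longrightarrow> M ** adj2 M = mat 1"
  by (simp add: mat2_eq mm2 det_2 algebra_simps)

lemma mat_of_inj: "mat_of A = mat_of B \<Longrightarrow> A = B"
  by (simp add: mat_of_inject)

lemma psl_mult_assoc: "psl_mult (psl_mult a b) c = psl_mult a (psl_mult b c)"
proof (induct a rule: PSL2C.abs_induct)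
  case (1 x) show ?case
  proof (induct b rule: PSL2C.abs_induct)
    case (1 y) show ?case
    proof (induct c rule: PSL2C.abs_induct)
      case (1 z) show ?case
        by (simp add: psl_mult.abs_eq psl_eq_iff mat_of_sl2_mult matrix_mul_assoc)
    qed
  qed
qed

lemma psl_one_left[simp]: "psl_mult psl_one a = a"
  by (induct a rule: PSL2C.abs_induct)
     (simp add: psl_one_def psl_mult.abs_eq psl_eq_iff mat_of_sl2_mult)

lemma psl_one_right[simp]: "psl_mult a psl_one = a"
  by (induct a rule: PSL2C.abs_induct)
     (simp add: psl_one_def psl_mult.abs_eq psl_eq_iff mat_of_sl2_mult)

lemma psl_inv_left[simp]: "psl_mult (psl_inv a) a = psl_one"
  by (induct a rule: PSL2C.abs_induct)
     (simp add: psl_one_def psl_mult.abs_eq psl_inv.abs_eq psl_eq_iff mat_of_sl2_mult mat_of_sl2_inv adj2_mult)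

lemma psl_inv_right[simp]: "psl_mult a (psl_inv a) = psl_one"
  by (induct a rule: PSL2C.abs_induct)
     (simp add: psl_one_def psl_mult.abs_eq psl_inv.abs_eq psl_eq_iff mat_of_sl2_mult mat_of_sl2_inv mult_adj2)

lemma psl_cancel_left: "psl_mult a b = psl_mult a c \<Longrightarrow> b = c"
  by (metis psl_inv_left psl_mult_assoc psl_one_left)

lemma norm2_le: "norm (x::'a::real_normed_vector^2) \<le> norm (x$1) + norm (x$2)"
  unfolding norm_vec_def by (rule order.trans[OF L2_set_le_sum]) (auto simp: sum_2)

lemma normM_le: "norm (A::complex^2^2) \<le> cmod (A$1$1) + cmod (A$1$2) + cmod (A$2$1) + cmod (A$2$2)"
  using norm2_le[of A] norm2_le[of "A$1"] norm2_le[of "A$2"] by simp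

lemma entry_le: "cmod ((A::complex^2^2)$i$j) \<le> norm A"
  using Finite_Cartesian_Product.norm_nth_le[of "A$i" j] Finite_Cartesian_Product.norm_nth_le[of A i] by linarith

lemma norm_mm: "norm ((A::complex^2^2) ** (B::complex^2^2)) \<le> 8 * norm A * norm B"
proof -
  have e: "cmod ((A ** B)$i$j) \<le> 2 * norm A * norm B" for i j
  proof -
    have "cmod ((A ** B)$i$j) \<le> cmod (A$i$1) * cmod (B$1$j) + cmod (A$i$2) * cmod (B$2$j)"
      unfolding mm2 by (rule order.trans[OF norm_triangle_ineq]) (simp add: norm_mult)
    also have "\<dots> \<le> norm A * norm B + norm A * norm B"
      using entry_le[of A i 1] entry_le[of A i 2] entry_le[of B 1 j] entry_le[of B 2 j]
      by (intro add_mono mult_mono) auto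
    finally show ?thesis by simp
  qed
  show ?thesis using normM_le[of "A ** B"] e[of 1 1] e[of 1 2] e[of 2 1] e[of 2 2] by linarith
qed

lemma norm_adj2: "norm (adj2 A) \<le> 4 * norm A"
  using normM_le[of "adj2 A"] entry_le[of A 1 1] entry_le[of A 1 2] entry_le[of A 2 1] entry_le[of A 2 2]
  by simp

lemma norm_neg_mat[simp]: "norm (- (A::complex^2^2)) = norm A"
  by (rule norm_minus_cancel)


definition pm :: "PSL2C \<Rightarrow> complex^2^2" where "pm g = mat_of (rep_PSL2C g)"

lemma det_pm[simp]: "det (pm g) = 1" by (simp add: pm_def)

lemma pm_inj: "pm g = pm g' \<Longrightarrow> g = g'"
  unfolding pm_def by (metis abs_rep mat_of_inj)

lemma mat_sub_ldistrib: "(P::complex^2^2) ** Q - P ** R = P ** (Q - R)"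
  by (metis add_diff_cancel diff_add_cancel matrix_add_ldistrib)

lemma dist_one_le: "psl_dist psl_one (abs_PSL2C A) \<le> norm (mat 1 - mat_of A)"
  by (simp add: psl_one_def psl_dist.abs_eq)

lemma kleinian_one: "kleinian G \<Longrightarrow> psl_one \<in> G"
  by (simp add: kleinian_def psl_subgroup_def)

lemma kleinian_mult: "kleinian G \<Longrightarrow> a \<in> G \<Longrightarrow> b \<in> G \<Longrightarrow> psl_mult a b \<in> G"
  by (simp add: kleinian_def psl_subgroup_def)

lemma kleinian_inv: "kleinian G \<Longrightarrow> a \<in> G \<Longrightarrow> psl_inv a \<in> G"
  by (simp add: kleinian_def psl_subgroup_def)

lemma L1:
  assumes K: "kleinian G"
  shows "finite {g\<in>G. norm (pm g) \<le> B}"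
proof (rule ccontr)
  assume inf: "infinite {g\<in>G. norm (pm g) \<le> B}"
  define S where "S = {g\<in>G. norm (pm g) \<le> B}"
  obtain e where e: "e > 0" "\<And>h. h \<in> G \<Longrightarrow> h \<noteq> psl_one \<Longrightarrow> e \<le> psl_dist psl_one h"
    using K kleinian_one[OF K] unfolding kleinian_def psl_discrete_def
    by (metis (no_types, lifting) eq_commute)
  have "S \<noteq> {}" using inf unfolding S_def by (metis finite.emptyI)
  then have B0: "B \<ge> 0" unfolding S_def using norm_ge_zero order.trans by blast
  have injp: "inj_on pm S" by (meson inj_onI pm_inj)
  have Tinf: "infinite (pm ` S)" using inf injp S_def finite_imageD by blast
  have Tsub: "pm ` S \<subseteq> cball 0 B" unfolding S_def by auto
  obtain X where "X islimpt (pm ` S)"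
    using Heine_Borel_imp_Bolzano_Weierstrass[OF compact_cball Tinf Tsub] by blast
  define d where "d = e / (64 * (B + 1))"
  have d0: "d > 0" using e B0 unfolding d_def by auto
  obtain A where A: "A \<in> pm ` S" "A \<noteq> X" "dist A X < d"
    using \<open>X islimpt _\<close> d0 unfolding islimpt_approachable by blast
  have "dist A X > 0" using A by simp
  then obtain A' where A': "A' \<in> pm ` S" "A' \<noteq> X" "dist A' X < dist A X"
    using \<open>X islimpt _\<close> unfolding islimpt_approachable by blast
  have AA': "A \<noteq> A'" using A' by auto
  have dAA: "norm (A - A') < 2 * d"
    using A(3) A'(3) dist_triangle2[of A A' X] by (simp add: dist_norm)
  obtain g g' where gg: "g \<in> S" "A = pm g" "g' \<in> S" "A' = pm g'" using A A' by blast
  have gG: "g \<in> G" "g' \<in> G" and nA: "norm A \<le> B" using gg S_def by auto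
  define k where "k = psl_mult (psl_inv g) g'"
  have kG: "k \<in> G" unfolding k_def using K gG kleinian_mult kleinian_inv by blast
  have kne: "k \<noteq> psl_one"
  proof
    assume "k = psl_one"
    then have "psl_mult (psl_inv g) g' = psl_mult (psl_inv g) g" by (simp add: k_def)
    then have "g' = g" by (rule psl_cancel_left)
    then show False using AA' gg by simp
  qed
  have keq: "k = abs_PSL2C (sl2_mult (sl2_inv (rep_PSL2C g)) (rep_PSL2C g'))"
    unfolding k_def by (metis abs_rep psl_inv.abs_eq psl_mult.abs_eq)
  have "psl_dist psl_one k \<le> norm (mat 1 - mat_of (sl2_mult (sl2_inv (rep_PSL2C g)) (rep_PSL2C g')))"
    unfolding keq by (rule dist_one_le)
  also have "\<dots> = norm (mat 1 - adj2 A ** A')"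
    using gg by (simp add: mat_of_sl2_mult mat_of_sl2_inv pm_def)
  also have "mat 1 - adj2 A ** A' = adj2 A ** (A - A')"
    using adj2_mult[of A] gg mat_sub_ldistrib[of "adj2 A" A A'] by simp
  also have "norm (adj2 A ** (A - A')) \<le> 8 * norm (adj2 A) * norm (A - A')" by (rule norm_mm)
  also have "\<dots> \<le> 8 * (4 * B) * (2 * d)"
    using norm_adj2[of A] nA dAA B0 by (intro mult_mono) auto
  also have "\<dots> < e" using e d0 B0 unfolding d_def by (simp add: field_simps)
  finally show False using e(2)[OF kG kne] by simp
qed

lemma kleinian_countable:
  assumes K: "kleinian G"
  shows "countable G"
proof -
  have "G \<subseteq> (\<Union>n::nat. {g\<in>G. norm (pm g) \<le> real n})"
    using real_nat_ceiling_ge by blast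
  moreover have "countable (\<Union>n::nat. {g\<in>G. norm (pm g) \<le> real n})"
    by (rule countable_UN) (auto intro: countable_finite L1[OF K])
  ultimately show ?thesis using countable_subset by blast
qed


definition proj :: "complex^2 \<Rightarrow> complex option" where
  "proj u = (if u$2 = 0 then None else Some (u$1 / u$2))"

definition det2 :: "complex^2 \<Rightarrow> complex^2 \<Rightarrow> complex" where
  "det2 u v = u$1 * v$2 - u$2 * v$1"

lemma vec2_nz: "(u::complex^2) \<noteq> 0 \<longleftrightarrow> u$1 \<noteq> 0 \<or> u$2 \<noteq> 0"
  by (simp add: vec2_eq)

lemma norm2_eq: "norm (u::complex^2) = sqrt ((cmod (u$1))\<^sup>2 + (cmod (u$2))\<^sup>2)"
  by (simp add: norm_vec_def L2_set_def sum_2)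

lemma mob_proj:
  assumes "det M \<noteq> 0" "u \<noteq> 0"
  shows "mobius_mat M (proj u) = proj (M *v u)"
proof (cases "u$2 = 0")
  case True
  then have "u$1 \<noteq> 0" using assms(2) vec2_nz by blast
  then show ?thesis using True
    by (auto simp: mobius_mat_def proj_def mv2 Let_def)
next
  case False
  have ne: "M$1$1 * u$1 + M$1$2 * u$2 \<noteq> 0" if "M$2$1 * u$1 + M$2$2 * u$2 = 0"
  proof
    assume h: "M$1$1 * u$1 + M$1$2 * u$2 = 0"
    have "det M * u$2 = M$1$1 * (M$2$1 * u$1 + M$2$2 * u$2) - M$2$1 * (M$1$1 * u$1 + M$1$2 * u$2)"
      by (simp add: det_2 algebra_simps)
    then show False using h that assms(1) False by simp
  qed
  have e1: "M$2$1 * u$1/u$2 + M$2$2 = (M$2$1 * u$1 + M$2$2 * u$2) / u$2"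
    using False by (simp add: field_simps)
  have e2: "M$1$1 * u$1/u$2 + M$1$2 = (M$1$1 * u$1 + M$1$2 * u$2) / u$2"
    using False by (simp add: field_simps)
  show ?thesis using False ne
    by (auto simp: mobius_mat_def proj_def mv2 Let_def e1 e2)
qed

lemma sqrt_div_sq: "a > 0 \<Longrightarrow> sqrt (X / a\<^sup>2) = sqrt X / a"
  by (simp add: real_sqrt_divide)

lemma chordal_proj:
  assumes u: "u \<noteq> 0" and v: "v \<noteq> 0"
  shows "chordal (proj u) (proj v) = 2 * cmod (det2 u v) / (norm u * norm v)"
proof -
  have nu: "norm u > 0" "norm v > 0" using u v by auto
  consider "u$2 = 0" "v$2 = 0" | "u$2 = 0" "v$2 \<noteq> 0" | "u$2 \<noteq> 0" "v$2 = 0" | "u$2 \<noteq> 0" "v$2 \<noteq> 0" by blast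
  then show ?thesis
  proof cases
    case 1 then show ?thesis by (simp add: proj_def det2_def)
  next
    case 2
    have u1: "u$1 \<noteq> 0" using u 2 vec2_nz by blast
    have nu': "norm u = cmod (u$1)" using 2 by (simp add: norm2_eq)
    have "1 + (cmod (v$1 / v$2))\<^sup>2 = (norm v)\<^sup>2 / (cmod (v$2))\<^sup>2"
      using 2 by (simp add: norm2_eq norm_divide power_divide field_simps)
    then have s: "sqrt (1 + (cmod (v$1 / v$2))\<^sup>2) = norm v / cmod (v$2)"
      using 2 nu by (simp add: real_sqrt_divide)
    show ?thesis using 2 u1 nu by (simp add: proj_def det2_def s nu' norm_mult field_simps)
  next
    case 3
    have v1: "v$1 \<noteq> 0" using v 3 vec2_nz by blast
    have nv': "norm v = cmod (v$1)" using 3 by (simp add: norm2_eq)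
    have "1 + (cmod (u$1 / u$2))\<^sup>2 = (norm u)\<^sup>2 / (cmod (u$2))\<^sup>2"
      using 3 by (simp add: norm2_eq norm_divide power_divide field_simps)
    then have s: "sqrt (1 + (cmod (u$1 / u$2))\<^sup>2) = norm u / cmod (u$2)"
      using 3 nu by (simp add: real_sqrt_divide)
    show ?thesis using 3 v1 nu by (simp add: proj_def det2_def s nv' norm_mult norm_minus_commute field_simps)
  next
    case 4
    have a: "1 + (cmod (v$1 / v$2))\<^sup>2 = (norm v)\<^sup>2 / (cmod (v$2))\<^sup>2"
      using 4 by (simp add: norm2_eq norm_divide power_divide field_simps)
    have b: "1 + (cmod (u$1 / u$2))\<^sup>2 = (norm u)\<^sup>2 / (cmod (u$2))\<^sup>2"
      using 4 by (simp add: norm2_eq norm_divide power_divide field_simps)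
    have s: "sqrt ((1 + (cmod (u$1 / u$2))\<^sup>2) * (1 + (cmod (v$1 / v$2))\<^sup>2)) = norm u * norm v / (cmod (u$2) * cmod (v$2))"
      unfolding a b using 4 nu by (simp add: real_sqrt_mult real_sqrt_divide)
    have d: "u$1 / u$2 - v$1 / v$2 = det2 u v / (u$2 * v$2)"
      using 4 by (simp add: det2_def field_simps)
    have "chordal (proj u) (proj v) = 2 * cmod (u$1/u$2 - v$1/v$2) / sqrt ((1 + (cmod (u$1/u$2))\<^sup>2) * (1 + (cmod (v$1/v$2))\<^sup>2))"
      using 4 by (simp add: proj_def)
    also have "\<dots> = 2 * (cmod (det2 u v) / (cmod (u$2) * cmod (v$2))) / (norm u * norm v / (cmod (u$2) * cmod (v$2)))"
      unfolding s d by (simp add: norm_divide norm_mult)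
    also have "\<dots> = 2 * cmod (det2 u v) / (norm u * norm v)"
      using 4 nu by (simp add: field_simps)
    finally show ?thesis .
  qed
qed

lemma proj_surj: "\<exists>u. u \<noteq> 0 \<and> p = proj u"
proof (cases p)
  case None
  then show ?thesis by (intro exI[of _ "vector [1, 0]"]) (simp add: vec2_nz proj_def vector_2)
next
  case (Some z)
  then show ?thesis by (intro exI[of _ "vector [z, 1]"]) (simp add: vec2_nz proj_def vector_2)
qed

lemma parallel:
  assumes "u \<noteq> 0" "det2 u w = 0"
  shows "\<exists>k. w = k *s u"
proof (cases "u$1 = 0")
  case True
  then have "u$2 \<noteq> 0" using assms vec2_nz by blast
  then show ?thesis using assms True
    by (intro exI[of _ "w$2 / u$2"]) (auto simp: vec2_eq det2_def field_simps)
next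
  case False
  then show ?thesis using assms
    by (intro exI[of _ "w$1 / u$1"]) (auto simp: vec2_eq det2_def field_simps)
qed

lemma det2_0_proj:
  assumes "u \<noteq> 0" "v \<noteq> 0" "det2 u v = 0"
  shows "proj u = proj v"
proof -
  obtain k where k: "v = k *s u" using parallel assms by blast
  then have "k \<noteq> 0" using assms(2) by auto
  then show ?thesis using k by (simp add: proj_def)
qed

lemma det2_mv: "det2 (M *v a) (M *v b) = det M * det2 a b"
  by (simp add: det2_def mv2 det_2 algebra_simps)

lemma det2_scale: "det2 (k *s a) (P *v (k *s a)) = k^2 * det2 a (P *v a)"
  by (simp add: det2_def mv2 algebra_simps power2_eq_square)

lemma mv_nz: "det (M::complex^2^2) = 1 \<Longrightarrow> u \<noteq> 0 \<Longrightarrow> M *v u \<noteq> 0"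
proof
  assume "det M = 1" "u \<noteq> 0" "M *v u = 0"
  then have "(adj2 M ** M) *v u = 0" by (simp add: matrix_vector_mul_assoc[symmetric])
  then show False using \<open>det M = 1\<close> \<open>u \<noteq> 0\<close> by (simp add: adj2_mult)
qed

lemma psl_act_pm: "psl_act g = mobius_mat (pm g)"
proof -
  have "psl_act g = psl_act (abs_PSL2C (rep_PSL2C g))" by simp
  also have "\<dots> = mobius_mat (pm g)" unfolding psl_act.abs_eq pm_def ..
  finally show ?thesis .
qed


definition ns :: "complex^2^2 \<Rightarrow> bool" where
  "ns P \<longleftrightarrow> P$1$2 \<noteq> 0 \<or> P$2$1 \<noteq> 0 \<or> P$1$1 \<noteq> P$2$2"

lemma comm_eqs:
  assumes "X ** P = P ** (X::complex^2^2)"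
  shows "X$1$2 * P$2$1 = P$1$2 * X$2$1 \<and>
    X$1$1 * P$1$2 + X$1$2 * P$2$2 = P$1$1 * X$1$2 + P$1$2 * X$2$2 \<and>
    X$2$1 * P$1$1 + X$2$2 * P$2$1 = P$2$1 * X$1$1 + P$2$2 * X$2$1"
proof -
  have a: "(X ** P)$1$1 = (P ** X)$1$1" and b: "(X ** P)$1$2 = (P ** X)$1$2"
    and c: "(X ** P)$2$1 = (P ** X)$2$1"
    using assms by simp_all
  from a have 1: "X$1$2 * P$2$1 = P$1$2 * X$2$1" by (simp add: mm2 algebra_simps)
  from b have 2: "X$1$1 * P$1$2 + X$1$2 * P$2$2 = P$1$1 * X$1$2 + P$1$2 * X$2$2"
    by (simp add: mm2 algebra_simps)
  from c have 3: "X$2$1 * P$1$1 + X$2$2 * P$2$1 = P$2$1 * X$1$1 + P$2$2 * X$2$1"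
    by (simp add: mm2 algebra_simps)
  show ?thesis using 1 2 3 by blast
qed

lemma span_cases:
  assumes "ns P" "X ** P = P ** (X::complex^2^2)"
  shows "\<exists>a b. X$1$1 = a + b*P$1$1 \<and> X$1$2 = b*P$1$2 \<and> X$2$1 = b*P$2$1 \<and> X$2$2 = a + b*P$2$2"
proof -
  have e: "X$1$2 * P$2$1 = P$1$2 * X$2$1"
    "X$1$1 * P$1$2 + X$1$2 * P$2$2 = P$1$1 * X$1$2 + P$1$2 * X$2$2"
    "X$2$1 * P$1$1 + X$2$2 * P$2$1 = P$2$1 * X$1$1 + P$2$2 * X$2$1"
    using comm_eqs[OF assms(2)] by blast+
  consider "P$1$2 \<noteq> 0" | "P$1$2 = 0" "P$2$1 \<noteq> 0" | "P$1$2 = 0" "P$2$1 = 0" "P$1$1 \<noteq> P$2$2"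
    using assms(1) unfolding ns_def by blast
  then show ?thesis
  proof cases
    case 1
    define b where "b = X$1$2 / P$1$2"
    show ?thesis
    proof (rule exI[of _ "X$1$1 - b * P$1$1"], rule exI[of _ b], intro conjI)
      show "X$1$2 = b * P$1$2" using 1 by (simp add: b_def)
      show "X$2$1 = b * P$2$1" using 1 e(1) by (simp add: b_def field_simps)
      have "P$1$2 * (X$1$1 - X$2$2) = X$1$2 * (P$1$1 - P$2$2)" using e(2) by (simp add: algebra_simps)
      then show "X$2$2 = X$1$1 - b * P$1$1 + b * P$2$2" using 1 by (simp add: b_def field_simps)
    qed simp
  next
    case 2
    define b where "b = X$2$1 / P$2$1"
    show ?thesis
    proof (rule exI[of _ "X$1$1 - b * P$1$1"], rule exI[of _ b], intro conjI)
      show "X$2$1 = b * P$2$1" using 2 by (simp add: b_def)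
      show "X$1$2 = b * P$1$2" using 2 e(1) by (simp add: b_def field_simps)
      have "P$2$1 * (X$1$1 - X$2$2) = X$2$1 * (P$1$1 - P$2$2)" using e(3) by (simp add: algebra_simps)
      then show "X$2$2 = X$1$1 - b * P$1$1 + b * P$2$2" using 2 by (simp add: b_def field_simps)
    qed simp
  next
    case 3
    define b where "b = (X$1$1 - X$2$2) / (P$1$1 - P$2$2)"
    have d: "P$1$1 - P$2$2 \<noteq> 0" using 3 by simp
    show ?thesis
    proof (rule exI[of _ "X$1$1 - b * P$1$1"], rule exI[of _ b], intro conjI)
      have "X$1$2 * (P$1$1 - P$2$2) = 0" using e(2) 3 by (simp add: algebra_simps)
      then show "X$1$2 = b * P$1$2" using 3 d by simp
      have "X$2$1 * (P$1$1 - P$2$2) = 0" using e(3) 3 by (simp add: algebra_simps)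
      then show "X$2$1 = b * P$2$1" using 3 d by simp
      have "b * (P$1$1 - P$2$2) = X$1$1 - X$2$2" using d by (simp add: b_def)
      then have "X$2$2 = X$1$1 - b * (P$1$1 - P$2$2)" by simp
      then show "X$2$2 = X$1$1 - b * P$1$1 + b * P$2$2" by (simp add: right_diff_distrib)
    qed simp
  qed
qed

lemma eigen_pres:
  assumes "ns P" "X ** P = P ** X" "det2 v (P *v v) = 0"
  shows "det2 v (X *v v) = 0"
proof -
  obtain a b where ab: "X$1$1 = a + b*P$1$1" "X$1$2 = b*P$1$2" "X$2$1 = b*P$2$1" "X$2$2 = a + b*P$2$2"
    using span_cases[OF assms(1,2)] by blast
  have "det2 v (X *v v) = b * det2 v (P *v v)"
    by (simp add: det2_def mv2 ab algebra_simps)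
  then show ?thesis using assms(3) by simp
qed

lemma comm_scalar:
  assumes "ns P" "X ** P = P ** X" "X ** Q = Q ** X" "P ** Q \<noteq> Q ** P" "det X = 1"
  shows "X = mat 1 \<or> X = - mat 1"
proof -
  obtain a b where ab: "X$1$1 = a + b*P$1$1" "X$1$2 = b*P$1$2" "X$2$1 = b*P$2$1" "X$2$2 = a + b*P$2$2"
    using span_cases[OF assms(1,2)] by blast
  have id0: "\<forall>i j. (X ** Q)$i$j - (Q ** X)$i$j = b * ((P ** Q)$i$j - (Q ** P)$i$j)"
    unfolding forall_2 by (simp add: mm2 ab algebra_simps)
  have id: "(X ** Q)$i$j - (Q ** X)$i$j = b * ((P ** Q)$i$j - (Q ** P)$i$j)" for i j
    using id0 by blast
  have "b = 0"
  proof (rule ccontr)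
    assume "b \<noteq> 0"
    then have "(P ** Q)$i$j = (Q ** P)$i$j" for i j using id[of i j] assms(3) by simp
    then show False using assms(4) by (simp add: vec_eq_iff)
  qed
  then have "a * a = 1" using assms(5) ab by (simp add: det_2)
  then have "a = 1 \<or> a = -1" by (metis (no_types) mult_cancel_left1 square_eq_1_iff power2_eq_square)
  then show ?thesis using ab \<open>b = 0\<close> by (auto simp: mat2_eq)
qed

lemma quad_roots:
  fixes c e f z :: complex
  assumes "c \<noteq> 0" "c*z^2 + e*z + f = 0"
  shows "z = (-e + csqrt (e^2 - 4*c*f)) / (2*c) \<or> z = (-e - csqrt (e^2 - 4*c*f)) / (2*c)"
proof -
  have "(2*c*z + e)^2 = (csqrt (e^2 - 4*c*f))^2"
  proof -
    have "(2*c*z + e)^2 = 4*c*(c*z^2 + e*z) + e^2" by (simp add: power2_eq_square algebra_simps)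
    also have "c*z^2 + e*z = -f" using assms(2) by (simp add: algebra_simps add_eq_0_iff)
    finally show ?thesis by (simp add: power2_csqrt)
  qed
  then have "2*c*z + e = csqrt (e^2 - 4*c*f) \<or> 2*c*z + e = - csqrt (e^2 - 4*c*f)"
    using power2_eq_iff by blast
  moreover have "z = (2*c*z) / (2*c)" using assms(1) by simp
  moreover have "2*c*z = -e + s" if h: "2*c*z + e = s" for s
  proof -
    have "2*c*z = (2*c*z + e) - e" by simp
    also have "\<dots> = -e + s" using h by simp
    finally show ?thesis .
  qed
  ultimately show ?thesis by (metis diff_conv_add_uminus)
qed

lemma F_sub:
  assumes "ns P"
  shows "\<exists>p q. {proj v |v. v \<noteq> 0 \<and> det2 v (P *v v) = 0} \<subseteq> {p, q}"
proof -
  have dv: "det2 v (P *v v) = P$2$1 * (v$1)^2 + (P$2$2 - P$1$1) * v$1 * v$2 - P$1$2 * (v$2)^2" for v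
    by (simp add: det2_def mv2 power2_eq_square algebra_simps)
  show ?thesis
  proof (cases "P$2$1 = 0")
    case False
    define c e f where "c = P$2$1" "e = P$2$2 - P$1$1" "f = - P$1$2"
    show ?thesis
    proof (intro exI subsetI)
      fix x assume "x \<in> {proj v |v. v \<noteq> 0 \<and> det2 v (P *v v) = 0}"
      then obtain v where v: "x = proj v" "v \<noteq> 0" "det2 v (P *v v) = 0" by blast
      have v2: "v$2 \<noteq> 0"
      proof
        assume "v$2 = 0"
        then have "v$1 \<noteq> 0" using v(2) vec2_nz by blast
        then show False using v(3) \<open>v$2 = 0\<close> False by (simp add: dv)
      qed
      have "c * (v$1/v$2)^2 + e * (v$1/v$2) + f = det2 v (P *v v) / (v$2)^2"
        using v2 by (simp add: dv c_e_f_def power2_eq_square field_simps)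
      then have "c * (v$1/v$2)^2 + e * (v$1/v$2) + f = 0" using v(3) by simp
      then have "v$1/v$2 = (-e + csqrt (e^2 - 4*c*f)) / (2*c) \<or> v$1/v$2 = (-e - csqrt (e^2 - 4*c*f)) / (2*c)"
        using quad_roots[of c] False c_e_f_def by blast
      then show "x \<in> {Some ((-e + csqrt (e^2 - 4*c*f)) / (2*c)), Some ((-e - csqrt (e^2 - 4*c*f)) / (2*c))}"
        using v(1) v2 by (auto simp: proj_def)
    qed
  next
    case True
    show ?thesis
    proof (intro exI subsetI)
      fix x assume "x \<in> {proj v |v. v \<noteq> 0 \<and> det2 v (P *v v) = 0}"
      then obtain v where v: "x = proj v" "v \<noteq> 0" "det2 v (P *v v) = 0" by blast
      show "x \<in> {None, Some (P$1$2 / (P$2$2 - P$1$1))}"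
      proof (cases "v$2 = 0")
        case True then show ?thesis using v by (simp add: proj_def)
      next
        case v2: False
        have "v$2 * ((P$2$2 - P$1$1) * v$1 - P$1$2 * v$2) = 0"
          using v(3) True by (simp add: dv power2_eq_square algebra_simps)
        then have h: "(P$2$2 - P$1$1) * v$1 = P$1$2 * v$2" using v2 by simp
        have "P$2$2 - P$1$1 \<noteq> 0"
        proof
          assume "P$2$2 - P$1$1 = 0"
          then have "P$1$2 = 0" using h v2 by simp
          then show False using assms True \<open>P$2$2 - P$1$1 = 0\<close> unfolding ns_def by simp
        qed
        then show ?thesis using h v(1) v2 by (simp add: proj_def field_simps)
      qed
    qed
  qed
qed


lemma ns_of_ne_one:
  assumes "h \<noteq> psl_one" shows "ns (pm h)"
proof (rule ccontr)
  assume "\<not> ns (pm h)"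
  then have e: "pm h $1$2 = 0" "pm h $2$1 = 0" "pm h $1$1 = pm h $2$2" unfolding ns_def by auto
  have "pm h $1$1 * pm h $1$1 = 1" using det_pm[of h] e by (simp add: det_2)
  then have "pm h $1$1 = 1 \<or> pm h $1$1 = -1"
    by (simp only: square_eq_1_iff)
  then have "pm h = mat 1 \<or> pm h = - mat 1" using e by (auto simp: mat2_eq)
  then have "abs_PSL2C (rep_PSL2C h) = abs_PSL2C (Abs_SL2C (mat 1))"
    unfolding psl_eq_iff by (auto simp: pm_def det_I)
  then show False using assms by (simp add: psl_one_def)
qed

lemma tr0:
  assumes "det (A::complex^2^2) = 1" "A ** B = - (B ** A)"
  shows "B$1$1 + B$2$2 = 0"
proof -
  have key: "(adj2 A ** (A ** B + B ** A))$1$1 + (adj2 A ** (A ** B + B ** A))$2$2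
      = 2 * det A * (B$1$1 + B$2$2)"
    by (simp add: mm2 det_2 algebra_simps)
  have "A ** B + B ** A = 0" using assms(2) by simp
  then have "2 * (B$1$1 + B$2$2) = 0" using key assms(1) by (simp add: mm2 algebra_simps)
  then show ?thesis by (simp only: mult_eq_0_iff) simp
qed

lemma sq_neg:
  assumes "det (B::complex^2^2) = 1" "B$1$1 + B$2$2 = 0"
  shows "B ** B = - mat 1"
proof -
  have d: "B$2$2 = - B$1$1" using assms(2) by (simp add: eq_neg_iff_add_eq_0 add.commute)
  have h: "B$1$1 * B$2$2 - B$1$2 * B$2$1 = 1" using assms(1) by (simp add: det_2)
  have e11: "B$1$1 * B$1$1 + B$1$2 * B$2$1 = -1" using h d by algebra
  have e12: "B$1$1 * B$1$2 + B$1$2 * B$2$2 = 0" using d by algebra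
  have e21: "B$2$1 * B$1$1 + B$2$2 * B$2$1 = 0" using d by algebra
  have e22: "B$2$1 * B$1$2 + B$2$2 * B$2$2 = -1" using h d by algebra
  show ?thesis unfolding mat2_eq mm2 using e11 e12 e21 e22 by simp
qed

lemma psl_mult_pm: "psl_mult g h = abs_PSL2C (sl2_mult (rep_PSL2C g) (rep_PSL2C h))"
proof -
  have "psl_mult g h = psl_mult (abs_PSL2C (rep_PSL2C g)) (abs_PSL2C (rep_PSL2C h))" by simp
  also have "\<dots> = abs_PSL2C (sl2_mult (rep_PSL2C g) (rep_PSL2C h))" by (rule psl_mult.abs_eq)
  finally show ?thesis .
qed

lemma psl_mult_eq_iff: "psl_mult a b = psl_mult c d \<longleftrightarrow> pm a ** pm b = pm c ** pm d \<or> pm a ** pm b = - (pm c ** pm d)"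
  unfolding psl_mult_pm psl_eq_iff by (simp add: mat_of_sl2_mult pm_def)

lemma comm_mat:
  assumes K: "kleinian G" and g: "g \<in> G" and h: "h \<in> G" "h \<noteq> psl_one"
    and c: "psl_mult g h = psl_mult h g"
  shows "pm g ** pm h = pm h ** pm g"
proof (rule ccontr)
  assume ne: "pm g ** pm h \<noteq> pm h ** pm g"
  then have m: "pm g ** pm h = - (pm h ** pm g)" using c unfolding psl_mult_eq_iff by blast
  have "pm h $1$1 + pm h $2$2 = 0" using tr0[OF det_pm m] .
  then have sq: "pm h ** pm h = - mat 1" using sq_neg det_pm by blast
  have "psl_pow h 2 = psl_mult h h" by (simp add: numeral_2_eq_2)
  also have "\<dots> = psl_one"
  proof -
    have "psl_mult h h = abs_PSL2C (sl2_mult (rep_PSL2C h) (rep_PSL2C h))" by (rule psl_mult_pm)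
    also have "\<dots> = abs_PSL2C (Abs_SL2C (mat 1))"
      unfolding psl_eq_iff using sq by (simp add: mat_of_sl2_mult pm_def det_I)
    finally show ?thesis by (simp add: psl_one_def)
  qed
  finally have p: "psl_pow h 2 = psl_one" .
  have tf: "torsion_free G" using K unfolding kleinian_def by simp
  have "h = psl_one" using tf h(1) p unfolding torsion_free_def
    by (metis zero_less_numeral)
  with h(2) show False by simp
qed

lemma sc2: "(c *\<^sub>R (M::complex^2^2))$i$j = of_real c * M$i$j"
  by (simp only: vector_scaleR_component) (simp add: scaleR_conv_of_real)

lemma sc1: "(c *\<^sub>R (v::complex^2))$i = of_real c * v$i"
  by (simp only: vector_scaleR_component) (simp add: scaleR_conv_of_real)

lemma scaled_det: "det (c *\<^sub>R (M::complex^2^2)) = of_real (c^2) * det M"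
  by (simp del: vector_scaleR_component add: det_2 sc2 power2_eq_square algebra_simps)

lemma scaled_mm: "(c *\<^sub>R (M::complex^2^2)) ** P = c *\<^sub>R (M ** P)"
  "P ** (c *\<^sub>R (M::complex^2^2)) = c *\<^sub>R (P ** M)"
  unfolding mat2_eq by (simp_all del: vector_scaleR_component add: mm2 sc2 algebra_simps)

lemma scaled_mv: "(c *\<^sub>R (M::complex^2^2)) *v u = c *\<^sub>R (M *v u)"
  unfolding vec2_eq by (simp del: vector_scaleR_component add: mv2 sc1 sc2 algebra_simps)

lemma det2_scaleR: "det2 (c *\<^sub>R a) w = of_real c * det2 a w"
  by (simp del: vector_scaleR_component add: det2_def sc1 algebra_simps)

lemma kill:
  assumes "R *v a = 0" "R *v b = 0" "det2 a b \<noteq> 0"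
  shows "R = (0::complex^2^2)"
proof -
  have ea: "R$i$1 * a$1 + R$i$2 * a$2 = 0" for i
  proof -
    have "(R *v a)$i = 0" using assms(1) by simp
    then show ?thesis by (simp only: mv2)
  qed
  have eb: "R$i$1 * b$1 + R$i$2 * b$2 = 0" for i
  proof -
    have "(R *v b)$i = 0" using assms(2) by simp
    then show ?thesis by (simp only: mv2)
  qed
  have "R$i$1 * det2 a b = b$2 * (R$i$1 * a$1 + R$i$2 * a$2) - a$2 * (R$i$1 * b$1 + R$i$2 * b$2)" for i
    by (simp add: det2_def algebra_simps)
  then have 1: "R$i$1 = 0" for i using ea eb assms(3) by simp
  have "R$i$2 * det2 a b = a$1 * (R$i$1 * b$1 + R$i$2 * b$2) - b$1 * (R$i$1 * a$1 + R$i$2 * a$2)" for i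
    by (simp add: det2_def algebra_simps)
  then have 2: "R$i$2 = 0" for i using ea eb assms(3) by simp
  show ?thesis using 1 2 by (simp add: mat2_eq)
qed


lemma abelian_limit:
  assumes K: "kleinian G" and HG: "H \<subseteq> G" and ns: "ns P"
    and comm: "\<And>g. g \<in> H \<Longrightarrow> pm g ** P = P ** pm g"
    and x: "x \<in> limit_set H"
  shows "x \<in> {proj v |v. v \<noteq> 0 \<and> det2 v (P *v v) = 0}"
proof -
  from x obtain z g where g: "\<forall>n. g n \<in> H" "inj g"
    and lim: "(\<lambda>n. chordal (psl_act (g n) z) x) \<longlonglongrightarrow> 0"
    unfolding limit_set_def by blast
  obtain u where u: "u \<noteq> 0" "z = proj u" using proj_surj by blast
  obtain w where w: "w \<noteq> 0" "x = proj w" using proj_surj by blast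
  define Gm where "Gm n = pm (g n)" for n
  have Gu: "Gm n *v u \<noteq> 0" for n using mv_nz u(1) by (simp add: Gm_def)
  have act: "psl_act (g n) z = proj (Gm n *v u)" for n
    using psl_act_pm mob_proj[of "Gm n" u] u by (simp add: Gm_def)
  have ch: "chordal (psl_act (g n) z) x = 2 * cmod (det2 (Gm n *v u) w) / (norm (Gm n *v u) * norm w)" for n
    using act chordal_proj[OF Gu w(1)] w by simp
  show ?thesis
  proof (rule ccontr)
    assume nx: "x \<notin> {proj v |v. v \<noteq> 0 \<and> det2 v (P *v v) = 0}"
    have wP: "det2 w (P *v w) \<noteq> 0" using nx w by blast
    show False
    proof (cases "det2 u (P *v u) = 0")
      case True
      have "det2 u (Gm n *v u) = 0" for n
        using eigen_pres[OF ns comm[OF g(1)[rule_format]] True] by (simp add: Gm_def)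
      then have "proj (Gm n *v u) = proj u" for n using det2_0_proj[OF u(1) Gu] by simp
      then have "chordal (psl_act (g n) z) x = chordal (proj u) (proj w)" for n using act w by simp
      then have "(\<lambda>n. chordal (proj u) (proj w)) \<longlonglongrightarrow> 0" using lim by simp
      then have "chordal (proj u) (proj w) = 0" by (simp add: LIMSEQ_const_iff)
      then have "det2 u w = 0" using chordal_proj[OF u(1) w(1)] u(1) w(1) by simp
      then obtain k where "w = k *s u" using parallel u(1) by blast
      then have "det2 w (P *v w) = 0" using det2_scale True by simp
      with wP show False by simp
    next
      case False
      have fin: "finite {n. norm (Gm n) \<le> B}" for B
      proof -
        have "{n. norm (Gm n) \<le> B} \<subseteq> g -` {y\<in>G. norm (pm y) \<le> B}" using g HG by (auto simp: Gm_def)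
        moreover have "finite (g -` {y\<in>G. norm (pm y) \<le> B})" using finite_vimageI[OF L1[OF K] g(2)] .
        ultimately show ?thesis by (rule finite_subset)
      qed
      have big: "filterlim (\<lambda>n. norm (Gm n)) at_top sequentially"
        unfolding filterlim_at_top_dense
      proof
        fix Z :: real
        obtain k where k: "{n. norm (Gm n) \<le> Z} \<subseteq> {..<k}" using finite_nat_bounded[OF fin] by blast
        have "Z < norm (Gm n)" if "n \<ge> k" for n
        proof (rule ccontr)
          assume "\<not> Z < norm (Gm n)"
          then have "n \<in> {n. norm (Gm n) \<le> Z}" by simp
          then have "n \<in> {..<k}" using k by blast
          with that show False by simp
        qed
        then show "\<forall>\<^sub>F n in sequentially. Z < norm (Gm n)" unfolding eventually_sequentially by blast
      qed
      have Gnz: "norm (Gm n) > 0" for n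
      proof -
        have "Gm n \<noteq> 0" using det_pm[of "g n"] by (auto simp: Gm_def det_2)
        then show ?thesis by simp
      qed
      define N where "N n = (1 / norm (Gm n)) *\<^sub>R Gm n" for n
      have Nn: "N n \<in> sphere 0 1" for n using Gnz[of n] by (simp add: N_def)
      obtain R r where R: "R \<in> sphere 0 1" "strict_mono r" "(N \<circ> r) \<longlonglongrightarrow> R"
        using seq_compactE[OF compact_imp_seq_compact[OF compact_sphere], of N 0 1] Nn by blast
      have ent: "(\<lambda>n. N (r n) $ i $ j) \<longlonglongrightarrow> R $ i $ j" for i j
      proof -
        have "(\<lambda>n. (N \<circ> r) n $ i) \<longlonglongrightarrow> R $ i" by (rule tendsto_vec_nth[OF R(3)])
        then have "(\<lambda>n. (N \<circ> r) n $ i $ j) \<longlonglongrightarrow> R $ i $ j" by (rule tendsto_vec_nth)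
        then show ?thesis by (simp add: o_def)
      qed
      have bigr: "filterlim (\<lambda>n. norm (Gm (r n))) at_top sequentially"
        using filterlim_compose[OF big filterlim_subseq[OF R(2)]] by (simp add: o_def)
      have detR: "det R = 0"
      proof -
        have "(\<lambda>n. det (N (r n))) \<longlonglongrightarrow> det R" unfolding det_2 by (intro tendsto_intros ent)
        moreover have "(\<lambda>n. det (N (r n))) \<longlonglongrightarrow> 0"
        proof -
          have dN: "det (N n) = of_real (inverse ((norm (Gm n))^2))" for n
            unfolding N_def scaled_det by (simp add: Gm_def power_one_over inverse_eq_divide)
          have "(\<lambda>n. inverse ((norm (Gm (r n)))^2)) \<longlonglongrightarrow> 0"
            by (rule tendsto_inverse_0_at_top[OF filterlim_pow_at_top[OF _ bigr]]) simp
          then have "(\<lambda>n. complex_of_real (inverse ((norm (Gm (r n)))^2))) \<longlonglongrightarrow> of_real 0"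
            by (rule tendsto_of_real)
          then show ?thesis by (simp add: dN)
        qed
        ultimately show ?thesis using LIMSEQ_unique by blast
      qed
      have NP: "N n ** P = P ** N n" for n
        unfolding N_def scaled_mm using comm[OF g(1)[rule_format]] by (simp add: Gm_def)
      have RP: "R ** P = P ** R"
      proof -
        have l1: "(\<lambda>n. (N (r n) ** P)$i$j) \<longlonglongrightarrow> (R ** P)$i$j" for i j
          unfolding mm2 by (intro tendsto_intros ent)
        have l2: "(\<lambda>n. (P ** N (r n))$i$j) \<longlonglongrightarrow> (P ** R)$i$j" for i j
          unfolding mm2 by (intro tendsto_intros ent)
        have "(R ** P)$i$j = (P ** R)$i$j" for i j
          using LIMSEQ_unique[OF l1[of i j, unfolded NP] l2[of i j]] .
        then show ?thesis by (simp add: vec_eq_iff)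
      qed
      have Rnz: "R \<noteq> 0" using R(1) by auto
      have PRu: "P *v (R *v u) = R *v (P *v u)" by (simp add: matrix_vector_mul_assoc RP)
      have Ru: "R *v u \<noteq> 0"
      proof
        assume h: "R *v u = 0"
        then have "R *v (P *v u) = 0" using PRu by simp
        then have "R = 0" using kill[OF h _ False] by simp
        with Rnz show False by simp
      qed
      have Reig: "det2 (R *v u) (P *v (R *v u)) = 0" unfolding PRu det2_mv detR by simp
      have RW: "det2 (R *v u) w \<noteq> 0"
      proof
        assume "det2 (R *v u) w = 0"
        then obtain k where "w = k *s (R *v u)" using parallel Ru by blast
        then have "det2 w (P *v w) = 0" using det2_scale Reig by simp
        with wP show False by simp
      qed
      define f where "f A = 2 * cmod (det2 (A *v u) w) / (norm (A *v u) * norm w)" for A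
      have fN: "f (N n) = chordal (psl_act (g n) z) x" for n
      proof -
        have c: "1 / norm (Gm n) > 0" using Gnz[of n] by simp
        have a: "cmod (det2 (N n *v u) w) = (1 / norm (Gm n)) * cmod (det2 (Gm n *v u) w)"
          unfolding N_def scaled_mv det2_scaleR norm_mult norm_of_real using c by simp
        have b: "norm (N n *v u) = (1 / norm (Gm n)) * norm (Gm n *v u)"
          unfolding N_def scaled_mv norm_scaleR using c by simp
        have "f (N n) = 2 * ((1 / norm (Gm n)) * cmod (det2 (Gm n *v u) w)) / (((1 / norm (Gm n)) * norm (Gm n *v u)) * norm w)"
          unfolding f_def a b ..
        also have "\<dots> = 2 * cmod (det2 (Gm n *v u) w) / (norm (Gm n *v u) * norm w)"
          using c by (simp add: field_simps)
        finally show ?thesis using ch by simp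
      qed
      have "(\<lambda>n. f (N (r n))) \<longlonglongrightarrow> f R"
      proof -
        have v: "(\<lambda>n. N (r n) *v u) \<longlonglongrightarrow> R *v u"
          by (rule vec_tendstoI) (unfold mv2, intro tendsto_intros ent)
        have d: "(\<lambda>n. det2 (N (r n) *v u) w) \<longlonglongrightarrow> det2 (R *v u) w"
          unfolding det2_def by (intro tendsto_intros tendsto_vec_nth v)
        show ?thesis unfolding f_def using Ru w(1) by (intro tendsto_intros d v) auto
      qed
      moreover have "(\<lambda>n. f (N (r n))) \<longlonglongrightarrow> 0"
        using LIMSEQ_subseq_LIMSEQ[OF lim R(2)] fN by (simp add: o_def)
      ultimately have "f R = 0" using LIMSEQ_unique by blast
      moreover have "f R > 0" using RW Ru w(1) by (simp add: f_def)
      ultimately show False by simp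
    qed
  qed
qed

lemma abelian_elementary:
  assumes K: "kleinian G" and HG: "H \<subseteq> G"
    and comm: "\<forall>a\<in>H. \<forall>b\<in>H. psl_mult a b = psl_mult b a"
  shows "elementary H"
proof (cases "\<exists>h\<in>H. h \<noteq> psl_one")
  case True
  then obtain h where h: "h \<in> H" "h \<noteq> psl_one" by blast
  have ns: "ns (pm h)" by (rule ns_of_ne_one[OF h(2)])
  have c: "pm g ** pm h = pm h ** pm g" if "g \<in> H" for g
    using comm_mat[OF K _ _ h(2)] HG h(1) that comm by blast
  obtain p q where pq: "{proj v |v. v \<noteq> 0 \<and> det2 v (pm h *v v) = 0} \<subseteq> {p, q}"
    using F_sub[OF ns] by blast
  have sub: "limit_set H \<subseteq> {p, q}" using abelian_limit[OF K HG ns c] pq by blast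
  have "finite (limit_set H)" using finite_subset[OF sub] by simp
  moreover have "card (limit_set H) \<le> 2"
  proof -
    have "card (limit_set H) \<le> card {p, q}" by (rule card_mono) (use sub in auto)
    also have "\<dots> \<le> 2" by (cases "p = q") auto
    finally show ?thesis .
  qed
  ultimately show ?thesis unfolding elementary_def by simp
next
  case False
  have "limit_set H = {}"
  proof (rule ccontr)
    assume "limit_set H \<noteq> {}"
    then obtain x where "x \<in> limit_set H" by blast
    then obtain z and g :: "nat \<Rightarrow> PSL2C" where g: "\<forall>n. g n \<in> H" "inj g"
      unfolding limit_set_def by blast
    then have "g 0 = psl_one" "g 1 = psl_one" using False by blast+
    then have "g 0 = g 1" by simp
    then show False using g(2) by (simp add: inj_eq)
  qed
  then show ?thesis unfolding elementary_def by simp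
qed


definition cj :: "PSL2C \<Rightarrow> PSL2C \<Rightarrow> PSL2C" where
  "cj p a = psl_mult (psl_mult p a) (psl_inv p)"

lemma inv_cancel: "psl_mult (psl_inv a) (psl_mult a x) = x"
  by (simp add: psl_mult_assoc[symmetric])

lemma cj_mult: "psl_mult (cj p a) (cj p b) = cj p (psl_mult a b)"
  unfolding cj_def by (simp add: psl_mult_assoc inv_cancel)

lemma cj_mat:
  assumes "cj p g = h"
  shows "pm p ** pm g ** adj2 (pm p) = pm h \<or> pm p ** pm g ** adj2 (pm p) = - pm h"
proof -
  have "cj p g = psl_mult (psl_mult (abs_PSL2C (rep_PSL2C p)) (abs_PSL2C (rep_PSL2C g))) (psl_inv (abs_PSL2C (rep_PSL2C p)))"
    unfolding cj_def by simp
  also have "\<dots> = abs_PSL2C (sl2_mult (sl2_mult (rep_PSL2C p) (rep_PSL2C g)) (sl2_inv (rep_PSL2C p)))"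
    by (simp only: psl_mult.abs_eq psl_inv.abs_eq)
  finally have "abs_PSL2C (sl2_mult (sl2_mult (rep_PSL2C p) (rep_PSL2C g)) (sl2_inv (rep_PSL2C p))) = abs_PSL2C (rep_PSL2C h)"
    using assms by simp
  then show ?thesis unfolding psl_eq_iff by (simp add: mat_of_sl2_mult mat_of_sl2_inv pm_def)
qed

lemma adj2_mult_assoc: "det Q = 1 \<Longrightarrow> adj2 Q ** (Q ** (X::complex^2^2)) = X"
  by (simp add: matrix_mul_assoc adj2_mult)

lemma mult_adj2_assoc: "det Q = 1 \<Longrightarrow> Q ** (adj2 Q ** (X::complex^2^2)) = X"
  by (simp add: matrix_mul_assoc mult_adj2)

lemma adj2_mult_right: "det Q = 1 \<Longrightarrow> (X::complex^2^2) ** adj2 Q ** Q = X"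
  by (simp add: matrix_mul_assoc[symmetric] adj2_mult)

lemma conj_eq_comm:
  assumes dP: "det Ps = 1" and dQ: "det Q = 1"
    and eq: "Ps ** G ** adj2 Ps = Q ** G ** adj2 Q"
  shows "(adj2 Q ** Ps) ** G = G ** (adj2 Q ** Ps)"
proof -
  have "adj2 Q ** (Ps ** G ** adj2 Ps) ** Ps = adj2 Q ** (Q ** G ** adj2 Q) ** Ps" by (simp add: eq)
  then show ?thesis
    by (simp add: matrix_mul_assoc adj2_mult dP dQ adj2_mult_right)
qed

lemma not_ns_comm: "\<not> ns P \<Longrightarrow> P ** Q = Q ** P"
  unfolding ns_def mat2_eq by (simp add: mm2 algebra_simps)

lemma subsingleton_countable: "(\<And>x y. x \<in> A \<Longrightarrow> y \<in> A \<Longrightarrow> x = y) \<Longrightarrow> countable A"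
proof (cases "A = {}")
  case False
  then obtain a where "a \<in> A" by blast
  moreover assume "\<And>x y. x \<in> A \<Longrightarrow> y \<in> A \<Longrightarrow> x = y"
  ultimately have "A \<subseteq> {a}" by blast
  then show ?thesis using countable_subset by blast
qed simp

definition St :: "PSL2C \<Rightarrow> PSL2C \<Rightarrow> PSL2C \<Rightarrow> PSL2C \<Rightarrow> bool \<Rightarrow> bool \<Rightarrow> PSL2C set" where
  "St g1 g2 h1 h2 s1 s2 = {p. pm g1 ** pm g2 \<noteq> pm g2 ** pm g1
     \<and> pm p ** pm g1 ** adj2 (pm p) = (if s1 then pm h1 else - pm h1)
     \<and> pm p ** pm g2 ** adj2 (pm p) = (if s2 then pm h2 else - pm h2)}"

lemma St_unique:
  assumes "p \<in> St g1 g2 h1 h2 s1 s2" "q \<in> St g1 g2 h1 h2 s1 s2"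
  shows "p = q"
proof -
  have nc: "pm g1 ** pm g2 \<noteq> pm g2 ** pm g1"
    and e1: "pm p ** pm g1 ** adj2 (pm p) = pm q ** pm g1 ** adj2 (pm q)"
    and e2: "pm p ** pm g2 ** adj2 (pm p) = pm q ** pm g2 ** adj2 (pm q)"
    using assms unfolding St_def by auto
  define M where "M = adj2 (pm q) ** pm p"
  have c1: "M ** pm g1 = pm g1 ** M" unfolding M_def by (rule conj_eq_comm[OF det_pm det_pm e1])
  have c2: "M ** pm g2 = pm g2 ** M" unfolding M_def by (rule conj_eq_comm[OF det_pm det_pm e2])
  have dM: "det M = 1" unfolding M_def by (simp add: det_mul det_adj2)
  have ns: "ns (pm g1)" using not_ns_comm nc by blast
  have "M = mat 1 \<or> M = - mat 1"
    by (rule comm_scalar[OF ns _ c2 nc dM]) (use c1 in simp)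
  moreover have "pm q ** M = pm p" unfolding M_def by (simp add: mult_adj2_assoc)
  ultimately have "pm p = pm q \<or> pm p = - pm q" by (auto simp: mat_mul_rneg)
  then have "abs_PSL2C (rep_PSL2C p) = abs_PSL2C (rep_PSL2C q)"
    unfolding psl_eq_iff by (simp add: pm_def)
  then show ?thesis by simp
qed

theorem mainTheorem19:
  assumes "kleinian \<Gamma>"
  shows "countable {\<psi>. \<not> elementary (psl_conj_set \<psi> \<Gamma> \<inter> \<Gamma>)}"
proof -
  define I where "I = \<Gamma> \<times> \<Gamma> \<times> \<Gamma> \<times> \<Gamma> \<times> (UNIV::bool set) \<times> (UNIV::bool set)"
  have cG: "countable \<Gamma>" by (rule kleinian_countable[OF assms])
  have cI: "countable I" unfolding I_def
    by (intro countable_SIGMA cG countable_finite) simp_all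
  have sub: "{\<psi>. \<not> elementary (psl_conj_set \<psi> \<Gamma> \<inter> \<Gamma>)} \<subseteq>
      (\<Union>t\<in>I. case t of (g1, g2, h1, h2, s1, s2) \<Rightarrow> St g1 g2 h1 h2 s1 s2)"
  proof
    fix p assume "p \<in> {\<psi>. \<not> elementary (psl_conj_set \<psi> \<Gamma> \<inter> \<Gamma>)}"
    then have ne: "\<not> elementary (psl_conj_set p \<Gamma> \<inter> \<Gamma>)" by simp
    have "\<not> (\<forall>a\<in>psl_conj_set p \<Gamma> \<inter> \<Gamma>. \<forall>b\<in>psl_conj_set p \<Gamma> \<inter> \<Gamma>. psl_mult a b = psl_mult b a)"
      using abelian_elementary[OF assms, of "psl_conj_set p \<Gamma> \<inter> \<Gamma>"] ne by blast
    then obtain a b where ab: "a \<in> psl_conj_set p \<Gamma>" "a \<in> \<Gamma>" "b \<in> psl_conj_set p \<Gamma>" "b \<in> \<Gamma>"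
      "psl_mult a b \<noteq> psl_mult b a" by blast
    obtain g1 where g1: "g1 \<in> \<Gamma>" "a = cj p g1" using ab(1) unfolding psl_conj_set_def cj_def by blast
    obtain g2 where g2: "g2 \<in> \<Gamma>" "b = cj p g2" using ab(3) unfolding psl_conj_set_def cj_def by blast
    have nc: "pm g1 ** pm g2 \<noteq> pm g2 ** pm g1"
    proof
      assume "pm g1 ** pm g2 = pm g2 ** pm g1"
      then have "psl_mult g1 g2 = psl_mult g2 g1" unfolding psl_mult_eq_iff by simp
      then have "psl_mult a b = psl_mult b a" unfolding g1(2) g2(2) cj_mult by simp
      with ab(5) show False by simp
    qed
    define s1 where "s1 = (pm p ** pm g1 ** adj2 (pm p) = pm a)"
    define s2 where "s2 = (pm p ** pm g2 ** adj2 (pm p) = pm b)"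
    have m1: "pm p ** pm g1 ** adj2 (pm p) = (if s1 then pm a else - pm a)"
      using cj_mat[OF g1(2)[symmetric]] unfolding s1_def by auto
    have m2: "pm p ** pm g2 ** adj2 (pm p) = (if s2 then pm b else - pm b)"
      using cj_mat[OF g2(2)[symmetric]] unfolding s2_def by auto
    have "(g1, g2, a, b, s1, s2) \<in> I" unfolding I_def using g1 g2 ab by simp
    moreover have "p \<in> St g1 g2 a b s1 s2" unfolding St_def using nc m1 m2 by simp
    ultimately show "p \<in> (\<Union>t\<in>I. case t of (g1, g2, h1, h2, s1, s2) \<Rightarrow> St g1 g2 h1 h2 s1 s2)"
      by force
  qed
  have "countable (\<Union>t\<in>I. case t of (g1, g2, h1, h2, s1, s2) \<Rightarrow> St g1 g2 h1 h2 s1 s2)"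
  proof (rule countable_UN[OF cI])
    fix t assume "t \<in> I"
    obtain g1 g2 h1 h2 s1 s2 where t: "t = (g1, g2, h1, h2, s1, s2)" by (cases t) blast
    show "countable (case t of (g1, g2, h1, h2, s1, s2) \<Rightarrow> St g1 g2 h1 h2 s1 s2)"
      unfolding t by (simp add: subsingleton_countable St_unique)
  qed
  then show ?thesis using sub countable_subset by blast
qed


end
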